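(* Let $\mathbf{G}=(\mathbf{L},\mathbf{H})$ be a $2\times M$ partial-monitoring game with real matrices such that $\mathbf{L}=\mathbf{K}\mathbf{H}$ for some $\mathbf{K}\in\mathbb{R}^{2\times2}$. Then there exists a $2\times M$ bandit game $\mathbf{G}'=(\mathbf{L}',\mathbf{H}')$ (i.e. $\mathbf{L}'=\mathbf{H}'$) with $\mathbf{G}\le\mathbf{G}'$. If $\mathbf{K}=\begin{pmatrix}0&0\\1&1\end{pmatrix}$, then $\mathbf{G}'$ can be chosen with $\mathbf{G}\simeq\mathbf{G}'$.
   Context: A partial-monitoring game $\mathbf{G}=(\mathbf{L},\mathbf{H})$ has real $N\times M$ loss matrix $\mathbf{L}=(\ell_{ij})$ and feedback matrix $\mathbf{H}=(h_{ij})$ (here entries may be arbitrary reals); $\underline{n}=\{1,\dots,n\}$. Nature fixes an outcome sequence $J_1,J_2,\ldots\in\underline{M}$ in advance; at each time $t$ Learner chooses (possibly at random) $I_t\in\underline{N}$ based on internal randomization and past feedbacks $h_{I_s,J_s}$, $s<t$, then observes $h_{I_t,J_t}$ and suffers loss $\ell_{I_t,J_t}$; such a rule is a strategy $\mathcal{A}$. Regret $R_T(\mathcal{A},\mathbf{G})=\mathbb{E}\big[\sum_{t=1}^T\ell_{I_t,J_t}-\min_i\sum_{t=1}^T\ell_{i,J_t}\big]$. A bandit game is one with $\mathbf{H}=\mathbf{L}$. For two $N\times M$ games, $\mathbf{G}'\le\mathbf{G}$ means: for every algorithm $\mathcal{A}$ there is an algorithm $\mathcal{A}'$ such that, for every outcome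 sequence, $\mathcal{A}'$ on $\mathbf{G}'$ chooses the same action sequence as $\mathcal{A}$ on $\mathbf{G}$ and $R_T(\mathcal{A}',\mathbf{G}')\le R_T(\mathcal{A},\mathbf{G})$; $\mathbf{G}\simeq\mathbf{G}'$ means both $\mathbf{G}\le\mathbf{G}'$ and $\mathbf{G}'\le\mathbf{G}$. *)

theory Defs
  imports "HOL-Probability.Probability"
begin

text \<open>Row i of a matrix is indexed by the action, column j by the outcome.\<close>

type_synonym ('m, 'n) game = "(real^'m^'n) \<times> (real^'m^'n)"

definition loss_mat :: "('m::finite, 'n::finite) game \<Rightarrow> real^'m^'n" where
  "loss_mat G = fst G"

definition feedback_mat :: "('m::finite, 'n::finite) game \<Rightarrow> real^'m^'n" where
  "feedback_mat G = snd G"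

definition bandit_game :: "('m::finite, 'n::finite) game \<Rightarrow> bool" where
  "bandit_game G \<longleftrightarrow> feedback_mat G = loss_mat G"

text \<open>A (randomized) strategy in behavioural form: given the history of the
  learner's own past actions together with the observed feedbacks, it outputs
  a probability distribution of the next action.\<close>

type_synonym ('n) strategy = "('n \<times> real) list \<Rightarrow> 'n pmf"

text \<open>Distribution of the action sequence I_1..I_T played by strategy A on a game
  with feedback matrix H against the outcome sequence J (time indexed from 0).\<close>

primrec actseq :: "real^'m::finite^'n::finite \<Rightarrow> 'n strategy \<Rightarrow> (nat \<Rightarrow> 'm) \<Rightarrow> nat \<Rightarrow> 'n list pmf" where
  "actseq H A J 0 = return_pmf []"
| "actseq H A J (Suc T) =
     bind_pmf (actseq H A J T)
       (\<lambda>xs. map_pmf (\<lambda>i. xs @ [i])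
               (A (map (\<lambda>t. (xs ! t, H $ (xs ! t) $ J t)) [0..<length xs])))"

definition regret :: "('m::finite, 'n::finite) game \<Rightarrow> 'n strategy \<Rightarrow> (nat \<Rightarrow> 'm) \<Rightarrow> nat \<Rightarrow> real" where
  "regret G A J T =
     measure_pmf.expectation (actseq (feedback_mat G) A J T)
       (\<lambda>xs. \<Sum>t<T. loss_mat G $ (xs ! t) $ J t)
     - Min (range (\<lambda>i. \<Sum>t<T. loss_mat G $ i $ J t))"

definition game_le :: "('m::finite, 'n::finite) game \<Rightarrow> ('m::finite, 'n::finite) game \<Rightarrow> bool" where
  "game_le G' G \<longleftrightarrow>
     (\<forall>A. \<exists>A'. \<forall>J T.
        actseq (feedback_mat G') A' J T = actseq (feedback_mat G) A J T
        \<and> regret G' A' J T \<le> regret G A J T)"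

definition game_equiv :: "('m::finite, 'n::finite) game \<Rightarrow> ('m::finite, 'n::finite) game \<Rightarrow> bool" where
  "game_equiv G G' \<longleftrightarrow> game_le G G' \<and> game_le G' G"

end

theory Submission
  imports Defs
begin

lemma actseq_sim:
  assumes "\<And>i j. H $ i $ j = g i (H' $ i $ j)"
  shows "actseq H' (\<lambda>hist. A (map (\<lambda>(i,h). (i, g i h)) hist)) J T = actseq H A J T"
proof (induction T)
  case 0 then show ?case by simp
next
  case (Suc T)
  show ?case by (simp add: Suc assms o_def)
qed

lemma actseq_finite: "finite (set_pmf (actseq H A J T))"
  by (induction T) auto

lemma regret_shift:
  assumes "\<And>i j. loss_mat G $ i $ j = loss_mat G' $ i $ j + c j"
    and "feedback_mat G = feedback_mat G'"
  shows "regret G A J T = regret G' A J T"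
proof -
  let ?C = "\<Sum>t<T. c (J t)"
  have e: "(\<lambda>xs. \<Sum>t<T. loss_mat G $ (xs ! t) $ J t) = (\<lambda>xs. (\<Sum>t<T. loss_mat G' $ (xs ! t) $ J t) + ?C)"
    by (simp add: assms(1) sum.distrib)
  have r: "range (\<lambda>i. \<Sum>t<T. loss_mat G $ i $ J t) = (\<lambda>x. x + ?C) ` range (\<lambda>i. \<Sum>t<T. loss_mat G' $ i $ J t)"
    by (auto simp add: assms(1) sum.distrib image_image)
  have m: "Min ((\<lambda>x. x + ?C) ` range (\<lambda>i. \<Sum>t<T. loss_mat G' $ i $ J t))
      = Min (range (\<lambda>i. \<Sum>t<T. loss_mat G' $ i $ J t)) + ?C"
    by (rule mono_Min_commute[symmetric]) (auto simp: mono_def)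
  have int: "integrable (measure_pmf (actseq (feedback_mat G') A J T)) (\<lambda>xs. \<Sum>t<T. loss_mat G' $ (xs ! t) $ J t)"
    by (rule integrable_measure_pmf_finite[OF actseq_finite])
  show ?thesis
    unfolding regret_def e r m assms(2)
    using int by simp
qed

lemma game_le_sim:
  fixes G G' :: "('m::finite,'n::finite) game" and g :: "'n \<Rightarrow> real \<Rightarrow> real"
  assumes "\<And>i j. feedback_mat G $ i $ j = g i (feedback_mat G' $ i $ j)"
    and "\<And>i j. loss_mat G $ i $ j = loss_mat G' $ i $ j + c j"
  shows "game_le G' G"
  unfolding game_le_def
proof
  fix A :: "'n strategy"
  let ?A' = "\<lambda>hist. A (map (\<lambda>(i,h). (i, g i h)) hist)"
  show "\<exists>A'. \<forall>J T. actseq (feedback_mat G') A' J T = actseq (feedback_mat G) A J T \<and>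
          regret G' A' J T \<le> regret G A J T"
  proof (intro exI allI conjI)
    fix J T
    have a: "actseq (feedback_mat G') ?A' J T = actseq (feedback_mat G) A J T"
      by (rule actseq_sim) (rule assms(1))
    show "actseq (feedback_mat G') ?A' J T = actseq (feedback_mat G) A J T" by (rule a)
    have "regret G A J T = regret (loss_mat G', feedback_mat G) A J T"
      by (rule regret_shift[where c=c]) (auto simp: loss_mat_def feedback_mat_def assms(2)[unfolded loss_mat_def])
    also have "\<dots> = measure_pmf.expectation (actseq (feedback_mat G) A J T)
       (\<lambda>xs. \<Sum>t<T. loss_mat G' $ (xs ! t) $ J t)
     - Min (range (\<lambda>i. \<Sum>t<T. loss_mat G' $ i $ J t))"
      by (simp add: regret_def loss_mat_def feedback_mat_def)
    also have "\<dots> = regret G' ?A' J T"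
      by (simp add: regret_def a)
    finally show "regret G' ?A' J T \<le> regret G A J T" by simp
  qed
qed

theorem proposition2:
  fixes L H :: "real^'m::finite^2" and K :: "real^2^2"
  assumes "L = K ** H"
  shows "(\<exists>G' :: ('m, 2) game. bandit_game G' \<and> game_le (L, H) G')
       \<and> (K = (\<chi> i j. if i = 1 then 1 else 0) \<longrightarrow>
            (\<exists>G' :: ('m, 2) game. bandit_game G' \<and> game_equiv (L, H) G'))"
proof -
  have univ: "(UNIV :: 2 set) = {0, 1}" using exhaust_2 by fastforce
  have Lij: "L $ i $ j = K $ i $ 0 * H $ 0 $ j + K $ i $ 1 * H $ 1 $ j" for i j
    using assms by (simp add: matrix_matrix_mult_def univ)
  define c where "c j = - K $ 0 $ 1 * H $ 1 $ j - K $ 1 $ 0 * H $ 0 $ j" for j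
  define g where "g (i::2) h = (if i = 0 then (K $ 0 $ 0 - K $ 1 $ 0) * h else (K $ 1 $ 1 - K $ 0 $ 1) * h)" for i h
  define L' :: "real^'m^2" where "L' = (\<chi> i j. g i (H $ i $ j))"
  have L'c: "L' $ i $ j = L $ i $ j + c j" for i j
  proof (cases "i = 0")
    case True then show ?thesis by (simp add: L'_def g_def Lij c_def algebra_simps)
  next
    case False
    then have "i = 1" using univ by auto
    then show ?thesis by (simp add: L'_def g_def Lij c_def algebra_simps)
  qed
  have L'c2: "g i (H $ i $ j) = L $ i $ j + c j" for i j using L'c[of i j] by (simp add: L'_def)
  have le1: "game_le (L, H) (L', L')"
    by (rule game_le_sim[where g=g and c=c])
       (auto simp: loss_mat_def feedback_mat_def L'_def L'c2)
  have part1: "\<exists>G' :: ('m, 2) game. bandit_game G' \<and> game_le (L, H) G'"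
    by (rule exI[of _ "(L', L')"]) (simp add: bandit_game_def loss_mat_def feedback_mat_def le1)
  have part2: "\<exists>G' :: ('m, 2) game. bandit_game G' \<and> game_equiv (L, H) G'"
    if K: "K = (\<chi> i j. if i = 1 then 1 else 0)"
  proof -
    have K00: "K $ 0 $ 0 = 0" "K $ 0 $ 1 = 0" "K $ 1 $ 0 = 1" "K $ 1 $ 1 = 1" using K by auto
    define g' where "g' (i::2) (h::real) = (if i = 0 then - h else h)" for i h
    have Hg: "H $ i $ j = g' i (L' $ i $ j)" for i j
      by (simp add: L'_def g_def g'_def K00)
    have le2: "game_le (L', L') (L, H)"
      by (rule game_le_sim[where g=g' and c="\<lambda>j. - c j"])
         (unfold loss_mat_def feedback_mat_def fst_conv snd_conv, rule Hg, simp add: L'c)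
    show ?thesis
      by (rule exI[of _ "(L', L')"]) (simp add: bandit_game_def loss_mat_def feedback_mat_def le1 le2 game_equiv_def)
  qed
  show ?thesis using part1 part2 by blast
qed

end
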